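(* Let $f$ be a base multi-label classifier with parameter $k'$, $\mathbf{x}\in\mathbb{R}^m$, $\sigma>0$, $\delta\in\mathbb{R}^m\setminus\{0\}$, and $\mathbf{Y}=\mathbf{x}+\delta+\epsilon$ with $\epsilon\sim\mathcal{N}(0,\sigma^2I)$; write $p_i^*=\Pr(i\in f_{k'}(\mathbf{Y}))$ and $p_i=\Pr(i\in f_{k'}(\mathbf{x}+\epsilon))$. Let $\Gamma\subseteq\{1,\dots,c\}$ be a nonempty set of $u$ labels with numbers $\underline{p_i}\in[0,1]$, $\underline{p_i}\le p_i$ for $i\in\Gamma$, such that $\underline{p_\Gamma}:=\sum_{i\in\Gamma}\underline{p_i}\le k'$. Then $$\max_{i\in\Gamma}p_i^*\ \ge\ \max\Big\{\max_{i\in\Gamma}\Phi\big(\Phi^{-1}(\underline{p_i})-\tfrac{\|\delta\|_2}{\sigma}\big),\ \tfrac{k'}{u}\,\Phi\big(\Phi^{-1}(\tfrac{\underline{p_\Gamma}}{k'})-\tfrac{\|\delta\|_2}{\sigma}\big)\Big\}.$$ Similarly, let $\Lambda\subseteq\{1,\dots,c\}$ be a nonempty set of $v$ labels with numbers $\overline{p}_j\in[0,1]$, $p_j\le\overline{p}_j$ for $j\in\Lambda$, such that $\overline{p}_\Lambda:=\sum_{j\in\Lambda}\overline{p}_j\le k'$. Then $$\min_{j\in\Lambda}p_j^*\ \le\ \min\Big\{\min_{j\in\Lambda}\Phi\big(\Phi^{-1}(\overline{p}_j)+\tfrac{\|\delta\|_2}{\sigma}\big),\ \tfrac{k'}{v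}\,\Phi\big(\Phi^{-1}(\tfrac{\overline{p}_\Lambda}{k'})+\tfrac{\|\delta\|_2}{\sigma}\big)\Big\}.$$
   Context: A base multi-label classifier $f$ with parameter $k'$ assigns to every input $\mathbf{w}\in\mathbb{R}^m$ a set $f_{k'}(\mathbf{w})\subseteq\{1,\dots,c\}$ of exactly $k'$ labels (measurably in $\mathbf{w}$). $\Phi$ is the standard normal CDF, $\Phi^{-1}$ its inverse, with $\Phi^{-1}(0)=-\infty$, $\Phi^{-1}(1)=+\infty$, $\Phi(\mp\infty)=0,1$. *)

theory Defs
  imports "HOL-Probability.Probability"
begin

definition Phi :: "real \<Rightarrow> real" where
  "Phi x = measure (density lborel std_normal_density) {..x}"

definition Phi_e :: "ereal \<Rightarrow> real" where
  "Phi_e z = (if z = -\<infinity> then 0 else if z = \<infinity> then 1 else Phi (real_of_ereal z))"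

definition Phi_inv :: "real \<Rightarrow> ereal" where
  "Phi_inv p = (if p \<le> 0 then -\<infinity> else if p \<ge> 1 then \<infinity>
                else ereal (THE x. Phi x = p))"

text \<open>Isotropic Gaussian N(0, sigma^2 I) on the Euclidean space 'a (= R^m, m = DIM('a)).\<close>
definition iso_gauss :: "real \<Rightarrow> ('a::euclidean_space) measure" where
  "iso_gauss \<sigma> = density lborel
     (\<lambda>x. ennreal ((2 * pi * \<sigma>\<^sup>2) powr (- real DIM('a) / 2) * exp (- (norm x)\<^sup>2 / (2 * \<sigma>\<^sup>2))))"

definition multilabel_classifier :: "nat \<Rightarrow> nat \<Rightarrow> ('a::euclidean_space \<Rightarrow> nat set) \<Rightarrow> bool" where
  "multilabel_classifier c k' f \<longleftrightarrow>
     (\<forall>w. f w \<subseteq> {1..c} \<and> card (f w) = k') \<and> (\<forall>i. {w. i \<in> f w} \<in> sets borel)"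

end

theory Submission
  imports Defs
begin


lemma Phi_cdf: "Phi x = cdf (density lborel std_normal_density) x"
  by (simp add: Phi_def cdf_def2)

lemma rd_std: "real_distribution (density lborel std_normal_density)"
  unfolding real_distribution_def real_distribution_axioms_def
  using prob_space_normal_density by auto

lemma Phi_point0: "measure (density lborel std_normal_density) {x} = 0"
proof -
  have "emeasure (density lborel std_normal_density) {x} = 0"
    by (subst emeasure_density) (auto intro!: nn_integral_null_set[of _ lborel, simplified])
  then show ?thesis by (simp add: measure_def)
qed

lemma Phi_cont: "isCont Phi x"
proof -
  interpret real_distribution "density lborel std_normal_density" by (rule rd_std)
  show ?thesis using isCont_cdf Phi_point0 by (simp add: Phi_cdf[abs_def])
qed

lemma Phi_mono: "a \<le> b \<Longrightarrow> Phi a \<le> Phi b"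
proof -
  interpret real_distribution "density lborel std_normal_density" by (rule rd_std)
  show "a \<le> b \<Longrightarrow> Phi a \<le> Phi b" using cdf_nondecreasing by (simp add: Phi_cdf)
qed

lemma Phi_strict_mono: assumes "a < b" shows "Phi a < Phi b"
proof -
  interpret real_distribution "density lborel std_normal_density" by (rule rd_std)
  define c where "c = (1 / sqrt (2 * pi)) * exp (- (a\<^sup>2 + b\<^sup>2) / 2)"
  have cpos: "c > 0" unfolding c_def by simp
  have le: "ennreal c * indicator {a<..b} x \<le> ennreal (std_normal_density x) * indicator {a<..b} x" for x
  proof (cases "x \<in> {a<..b}")
    case True
    have "x\<^sup>2 \<le> a\<^sup>2 + b\<^sup>2"
    proof (cases "x \<ge> 0")
      case c: True
      then have "x\<^sup>2 \<le> b\<^sup>2" using True power_mono[of x b 2] by simp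
      then show ?thesis by (simp add: add_increasing)
    next
      case c: False
      then have "(-x)\<^sup>2 \<le> (-a)\<^sup>2" using True power_mono[of "-x" "-a" 2] by simp
      then show ?thesis by (simp add: add_increasing2)
    qed
    then have "c \<le> std_normal_density x" unfolding c_def std_normal_density_def
      by (intro mult_left_mono) auto
    then show ?thesis using True by (simp add: ennreal_leI)
  qed simp
  have "emeasure (density lborel std_normal_density) {a<..b} =
      (\<integral>\<^sup>+ x. ennreal (std_normal_density x) * indicator {a<..b} x \<partial>lborel)"
    by (subst emeasure_density) auto
  also have "\<dots> \<ge> (\<integral>\<^sup>+ x. ennreal c * indicator {a<..b} x \<partial>lborel)"
    by (intro nn_integral_mono le)
  also have "(\<integral>\<^sup>+ x. ennreal c * indicator {a<..b} x \<partial>lborel) = ennreal c * ennreal (b - a)"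
    using assms by (subst nn_integral_cmult_indicator) auto
  finally have "ennreal c * ennreal (b - a) \<le> ennreal (Phi b - Phi a)"
    using emeasure_Ioc[of a b] assms by (simp add: Phi_cdf)
  moreover have "ennreal c * ennreal (b - a) > 0" using cpos assms
    by (simp add: ennreal_mult'' ennreal_zero_less_mult_iff)
  ultimately have "ennreal (Phi b - Phi a) > 0" by (metis less_le_trans)
  then show ?thesis using ennreal_eq_0_iff[of "Phi b - Phi a"] by fastforce
qed

lemma Phi_lim_top: "(Phi \<longlongrightarrow> 1) at_top"
proof -
  interpret real_distribution "density lborel std_normal_density" by (rule rd_std)
  show ?thesis using cdf_lim_at_top_prob by (simp add: Phi_cdf[abs_def])
qed

lemma Phi_lim_bot: "(Phi \<longlongrightarrow> 0) at_bot"
proof -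
  interpret real_distribution "density lborel std_normal_density" by (rule rd_std)
  show ?thesis using cdf_lim_at_bot by (simp add: Phi_cdf[abs_def])
qed

lemma Phi_inv_ex: assumes "0 < p" "p < 1" shows "\<exists>!x. Phi x = p"
proof -
  from order_tendstoD(2)[OF Phi_lim_bot assms(1)] obtain a where a: "Phi a < p"
    by (meson eventually_at_bot_linorder order_refl)
  from order_tendstoD(1)[OF Phi_lim_top assms(2)] obtain b where b: "Phi b > p"
    by (meson eventually_at_top_linorder order_refl)
  have "a < b" using a b Phi_mono by (meson leI order.strict_trans2 order_less_asym)
  then obtain x where "Phi x = p"
    using IVT[of Phi a p b] a b Phi_cont by (auto intro: less_imp_le)
  moreover have "Phi y = p \<Longrightarrow> y = x" for y using Phi_strict_mono
    by (metis \<open>Phi x = p\<close> linorder_neqE_linordered_idom order_less_irrefl)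
  ultimately show ?thesis by (intro ex1I[of _ x])
qed

lemma Phi_inv_real: assumes "0 < p" "p < 1"
  shows "Phi_inv p = ereal (THE x. Phi x = p)" "Phi (THE x. Phi x = p) = p"
  using assms theI'[OF Phi_inv_ex[OF assms]] unfolding Phi_inv_def by simp_all



definition phi0 :: "real \<Rightarrow> 'a::euclidean_space \<Rightarrow> real" where
  "phi0 \<sigma> z = (2 * pi * \<sigma>\<^sup>2) powr (- real DIM('a) / 2) * exp (- (norm z)\<^sup>2 / (2 * \<sigma>\<^sup>2))"

lemma iso_gauss_phi0: "iso_gauss \<sigma> = density lborel (\<lambda>z. ennreal (phi0 \<sigma> z))"
  by (simp add: iso_gauss_def phi0_def)

lemma norm_sum_basis_sq:
  "(norm (\<Sum>b\<in>Basis. f b *\<^sub>R b :: 'a::euclidean_space))\<^sup>2 = (\<Sum>b\<in>Basis. (f b)\<^sup>2)"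
proof -
  let ?v = "(\<Sum>b\<in>Basis. f b *\<^sub>R b :: 'a)"
  have "(norm ?v)\<^sup>2 = ?v \<bullet> ?v" by (simp add: power2_norm_eq_inner)
  also have "\<dots> = (\<Sum>b\<in>Basis. (?v \<bullet> b) * (?v \<bullet> b))" by (rule euclidean_inner)
  also have "\<dots> = (\<Sum>b\<in>Basis. (f b)\<^sup>2)" by (intro sum.cong) (auto simp: power2_eq_square)
  finally show ?thesis .
qed

lemma inv_sqrt_pow: assumes "y > 0" shows "(1 / sqrt y) ^ n = y powr (- real n / 2)"
proof -
  have "1 / sqrt y = y powr (- 1 / 2)" using assms
    by (simp add: powr_minus_divide powr_half_sqrt[symmetric])
  then have "(1 / sqrt y) ^ n = (y powr (-1/2)) powr real n" using assms by (simp add: powr_realpow)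
  also have "\<dots> = y powr (- real n / 2)" by (simp add: powr_powr)
  finally show ?thesis .
qed

lemma phi0_prod: assumes "\<sigma> > 0"
  shows "phi0 \<sigma> (\<Sum>b\<in>Basis. f b *\<^sub>R b :: 'a::euclidean_space) = (\<Prod>b\<in>Basis. normal_density 0 \<sigma> (f b))"
proof -
  have "(\<Prod>b\<in>Basis. normal_density 0 \<sigma> (f b)) =
     (\<Prod>b\<in>(Basis::'a set). 1 / sqrt (2 * pi * \<sigma>\<^sup>2)) * (\<Prod>b\<in>(Basis::'a set). exp (- (f b)\<^sup>2 / (2 * \<sigma>\<^sup>2)))"
    unfolding prod.distrib[symmetric] by (intro prod.cong) (simp_all add: normal_density_def)
  also have "\<dots> = (2 * pi * \<sigma>\<^sup>2) powr (- real DIM('a) / 2) * exp (- (\<Sum>b\<in>(Basis::'a set). (f b)\<^sup>2) / (2 * \<sigma>\<^sup>2))"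
    using assms by (simp add: inv_sqrt_pow exp_sum[symmetric] sum_divide_distrib sum_negf)
  finally show ?thesis by (simp add: phi0_def norm_sum_basis_sq)
qed



abbreviation N1 :: "real \<Rightarrow> real measure" where
  "N1 \<sigma> \<equiv> density lborel (normal_density 0 \<sigma>)"

lemma PiM_normal_eq:
  assumes "\<sigma> > 0"
  shows "density (\<Pi>\<^sub>M b\<in>(Basis::'a::euclidean_space set). lborel) (\<lambda>f. ennreal (\<Prod>b\<in>Basis. normal_density 0 \<sigma> (f b)))
         = (\<Pi>\<^sub>M b\<in>(Basis::'a set). N1 \<sigma>)"
proof -
  interpret P: product_prob_space "\<lambda>_::'a. N1 \<sigma>"
    using assms by (intro product_prob_spaceI prob_space_normal_density)
  interpret L: product_sigma_finite "\<lambda>_::'a. (lborel::real measure)"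
    by standard
  show ?thesis
  proof (rule P.PiM_eqI)
    show "finite (Basis::'a set)" by simp
    show "sets (density (\<Pi>\<^sub>M b\<in>(Basis::'a set). lborel) (\<lambda>f. ennreal (\<Prod>b\<in>Basis. normal_density 0 \<sigma> (f b))))
        = sets (\<Pi>\<^sub>M b\<in>(Basis::'a set). N1 \<sigma>)"
      by (simp add: sets_PiM_cong[of _ _ "\<lambda>_. N1 \<sigma>" "\<lambda>_. lborel"])
    fix A assume A: "\<And>i. i \<in> (Basis::'a set) \<Longrightarrow> A i \<in> sets (N1 \<sigma>)"
    then have A': "\<And>i. i \<in> (Basis::'a set) \<Longrightarrow> A i \<in> sets borel" by simp
    have PiA: "Pi\<^sub>E Basis A \<in> sets (\<Pi>\<^sub>M b\<in>(Basis::'a set). lborel)"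
      using A' by (intro sets_PiM_I_finite) auto
    have "emeasure (density (\<Pi>\<^sub>M b\<in>(Basis::'a set). lborel) (\<lambda>f. ennreal (\<Prod>b\<in>Basis. normal_density 0 \<sigma> (f b)))) (Pi\<^sub>E Basis A)
      = (\<integral>\<^sup>+ f. ennreal (\<Prod>b\<in>Basis. normal_density 0 \<sigma> (f b)) * indicator (Pi\<^sub>E Basis A) f \<partial>(\<Pi>\<^sub>M b\<in>(Basis::'a set). lborel))"
      using PiA by (subst emeasure_density) auto
    also have "\<dots> = (\<integral>\<^sup>+ f. (\<Prod>b\<in>Basis. ennreal (normal_density 0 \<sigma> (f b)) * indicator (A b) (f b)) \<partial>(\<Pi>\<^sub>M b\<in>(Basis::'a set). lborel))"
    proof (intro nn_integral_cong)
      fix f :: "'a \<Rightarrow> real" assume f: "f \<in> space (\<Pi>\<^sub>M b\<in>(Basis::'a set). lborel)"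
      then have ext: "f \<in> extensional Basis" by (simp add: space_PiM PiE_def)
      have ind: "indicator (Pi\<^sub>E Basis A) f = (\<Prod>b\<in>(Basis::'a set). indicator (A b) (f b) :: ennreal)"
        using ext by (auto simp: indicator_def PiE_def Pi_def prod_zero_iff)
      show "ennreal (\<Prod>b\<in>Basis. normal_density 0 \<sigma> (f b)) * indicator (Pi\<^sub>E Basis A) f =
            (\<Prod>b\<in>Basis. ennreal (normal_density 0 \<sigma> (f b)) * indicator (A b) (f b))"
        unfolding ind prod.distrib by (simp add: prod_ennreal)
    qed
    also have "\<dots> = (\<Prod>b\<in>(Basis::'a set). \<integral>\<^sup>+ x. ennreal (normal_density 0 \<sigma> x) * indicator (A b) x \<partial>lborel)"
      using A' by (subst L.product_nn_integral_prod) auto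
    also have "\<dots> = (\<Prod>b\<in>(Basis::'a set). emeasure (N1 \<sigma>) (A b))"
      using A' by (intro prod.cong refl) (simp add: emeasure_density)
    finally show "emeasure (density (\<Pi>\<^sub>M b\<in>(Basis::'a set). lborel) (\<lambda>f. ennreal (\<Prod>b\<in>Basis. normal_density 0 \<sigma> (f b)))) (Pi\<^sub>E Basis A)
      = (\<Prod>b\<in>(Basis::'a set). emeasure (N1 \<sigma>) (A b))" .
  qed
qed

lemma iso_gauss_prod:
  assumes "\<sigma> > 0"
  shows "iso_gauss \<sigma> = distr (\<Pi>\<^sub>M b\<in>(Basis::'a::euclidean_space set). N1 \<sigma>) borel (\<lambda>f. \<Sum>b\<in>Basis. f b *\<^sub>R b)"
proof -
  let ?T = "\<lambda>f. \<Sum>b\<in>(Basis::'a set). f b *\<^sub>R b"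
  have Tm[measurable]: "?T \<in> measurable (\<Pi>\<^sub>M b\<in>(Basis::'a set). lborel) borel" by measurable
  have "iso_gauss \<sigma> = density (distr (\<Pi>\<^sub>M b\<in>(Basis::'a set). lborel) borel ?T) (\<lambda>z. ennreal (phi0 \<sigma> z))"
    by (simp add: iso_gauss_phi0 lborel_eq[symmetric])
  also have "\<dots> = distr (density (\<Pi>\<^sub>M b\<in>(Basis::'a set). lborel) (\<lambda>f. ennreal (phi0 \<sigma> (?T f)))) borel ?T"
    by (intro density_distr) (auto simp: phi0_def)
  also have "(\<lambda>f. ennreal (phi0 \<sigma> (?T f))) = (\<lambda>f. ennreal (\<Prod>b\<in>Basis. normal_density 0 \<sigma> (f b)))"
    using assms by (simp add: phi0_prod)
  also have "density (\<Pi>\<^sub>M b\<in>(Basis::'a set). lborel) (\<lambda>f. ennreal (\<Prod>b\<in>Basis. normal_density 0 \<sigma> (f b)))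
         = (\<Pi>\<^sub>M b\<in>(Basis::'a set). N1 \<sigma>)" by (rule PiM_normal_eq[OF assms])
  finally show ?thesis .
qed



lemma coord_indep:
  assumes "\<sigma> > 0"
  shows "prob_space.indep_vars (\<Pi>\<^sub>M b\<in>(Basis::'a::euclidean_space set). N1 \<sigma>) (\<lambda>_. borel) (\<lambda>b f. f b) Basis"
proof -
  let ?P = "\<Pi>\<^sub>M b\<in>(Basis::'a set). N1 \<sigma>"
  have ps: "prob_space (N1 \<sigma>)" using assms by (rule prob_space_normal_density)
  interpret prob_space ?P by (rule prob_space_PiM) (rule ps)
  have comp: "distr ?P borel (\<lambda>f. f b) = N1 \<sigma>" if "b \<in> Basis" for b
  proof -
    have "distr ?P borel (\<lambda>f. f b) = distr ?P (N1 \<sigma>) (\<lambda>f. f b)" by (rule distr_cong) simp_all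
    also have "\<dots> = N1 \<sigma>" using that ps by (intro distr_PiM_component)
    finally show ?thesis .
  qed
  have sP: "sets (\<Pi>\<^sub>M i\<in>(Basis::'a set). borel) = sets ?P" by (intro sets_PiM_cong) simp_all
  have "distr ?P (\<Pi>\<^sub>M i\<in>(Basis::'a set). borel) (\<lambda>x. \<lambda>i\<in>Basis. x i) = distr ?P ?P (\<lambda>x. x)"
  proof (rule distr_cong[OF refl sP])
    fix x assume "x \<in> space ?P"
    then have "x \<in> Pi\<^sub>E Basis (\<lambda>_. UNIV)" by (simp add: space_PiM)
    then show "(\<lambda>i\<in>Basis. x i) = x" by (rule PiE_restrict)
  qed
  also have "\<dots> = ?P" by (rule distr_id2) simp
  also have "\<dots> = (\<Pi>\<^sub>M i\<in>(Basis::'a set). distr ?P borel (\<lambda>f. f i))"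
    by (rule PiM_cong[OF refl]) (simp add: comp)
  finally have eq: "distr ?P (\<Pi>\<^sub>M i\<in>(Basis::'a set). borel) (\<lambda>x. \<lambda>i\<in>Basis. x i) =
     (\<Pi>\<^sub>M i\<in>(Basis::'a set). distr ?P borel (\<lambda>f. f i))" .
  have rv: "random_variable borel (\<lambda>f. f i)" if "i \<in> Basis" for i :: 'a
    using that by measurable
  show ?thesis
    using eq by (subst indep_vars_iff_distr_eq_PiM'[OF _ rv]) simp_all
qed



lemma marginal:
  fixes w :: "'a::euclidean_space"
  assumes sig: "\<sigma> > 0" and w: "norm w = 1"
  shows "measure (iso_gauss \<sigma>) {e::'a. e \<bullet> w \<le> t} = Phi (t / \<sigma>)"
proof -
  let ?P = "\<Pi>\<^sub>M b\<in>(Basis::'a set). N1 \<sigma>"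
  let ?T = "\<lambda>f. \<Sum>b\<in>(Basis::'a set). f b *\<^sub>R b"
  have ps: "prob_space (N1 \<sigma>)" using sig by (rule prob_space_normal_density)
  interpret prob_space ?P by (rule prob_space_PiM) (rule ps)
  define B' where "B' = {b\<in>(Basis::'a set). b \<bullet> w \<noteq> 0}"
  define c where "c b = (b \<bullet> w) / \<sigma>" for b :: 'a
  define Y where "Y f = (\<Sum>b\<in>B'. c b * f b)" for f :: "'a \<Rightarrow> real"
  have finB': "finite B'" by (simp add: B'_def)
  have B'sub: "B' \<subseteq> Basis" by (auto simp: B'_def)
  have B'ne: "B' \<noteq> {}"
  proof
    assume "B' = {}"
    then have "\<And>b. b \<in> Basis \<Longrightarrow> w \<bullet> b = 0" by (auto simp: B'_def inner_commute)
    then have "w = 0" by (metis euclidean_eqI inner_zero_left)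
    then show False using w by simp
  qed
  have cnz: "c b \<noteq> 0" if "b \<in> B'" for b using that sig by (auto simp: B'_def c_def)
  have comp: "distr ?P lborel (\<lambda>f. f b) = N1 \<sigma>" if "b \<in> Basis" for b
  proof -
    have "distr ?P lborel (\<lambda>f. f b) = distr ?P (N1 \<sigma>) (\<lambda>f. f b)" by (rule distr_cong) simp_all
    also have "\<dots> = N1 \<sigma>" using that ps by (intro distr_PiM_component)
    finally show ?thesis .
  qed
  have dcoord: "distributed ?P lborel (\<lambda>f. f b) (normal_density 0 \<sigma>)" if "b \<in> Basis" for b
    unfolding distributed_def using comp[OF that] that by auto
  have dX: "distributed ?P lborel (\<lambda>f. c b * f b) (normal_density 0 (\<bar>c b\<bar> * \<sigma>))" if "b \<in> B'" for b
    using normal_density_affine[OF dcoord[of b] sig cnz[OF that], of 0] that B'sub by auto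
  have ind: "indep_vars (\<lambda>_. borel) (\<lambda>b f. c b * f b) B'"
    by (rule indep_vars_compose2[where X="\<lambda>b f. f b" and M'="\<lambda>_. borel", OF indep_vars_subset[OF coord_indep[OF sig] B'sub]])
       simp
  have dY0: "distributed ?P lborel Y (normal_density (\<Sum>b\<in>B'. 0) (sqrt (\<Sum>b\<in>B'. (\<bar>c b\<bar> * \<sigma>)\<^sup>2)))"
    unfolding Y_def
    by (rule sum_indep_normal[OF finB' B'ne ind]) (use sig cnz dX in auto)
  have "(\<Sum>b\<in>B'. (\<bar>c b\<bar> * \<sigma>)\<^sup>2) = (\<Sum>b\<in>B'. (w \<bullet> b) * (w \<bullet> b))"
    using sig by (intro sum.cong refl) (simp add: c_def power2_eq_square inner_commute)
  also have "\<dots> = (\<Sum>b\<in>Basis. (w \<bullet> b) * (w \<bullet> b))"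
    by (rule sum.mono_neutral_left) (auto simp: B'_def inner_commute)
  also have "\<dots> = w \<bullet> w" by (rule euclidean_inner[symmetric])
  also have "\<dots> = 1" using w by (simp add: power2_norm_eq_inner[symmetric])
  finally have "distributed ?P lborel Y std_normal_density" using dY0 by simp
  then have dY: "distr ?P lborel Y = density lborel std_normal_density" and Ym: "Y \<in> measurable ?P lborel"
    by (auto simp: distributed_def)
  have Tw: "?T f \<bullet> w = \<sigma> * Y f" for f
  proof -
    have "?T f \<bullet> w = (\<Sum>b\<in>Basis. f b * (b \<bullet> w))" by (simp add: inner_sum_left)
    also have "\<dots> = (\<Sum>b\<in>B'. f b * (b \<bullet> w))"
      by (rule sum.mono_neutral_right) (auto simp: B'_def)
    also have "\<dots> = \<sigma> * Y f" using sig
      by (simp add: Y_def c_def sum_distrib_left mult.commute)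
    finally show ?thesis .
  qed
  have Sm: "{e::'a. e \<bullet> w \<le> t} \<in> sets borel" by measurable
  have Tm: "?T \<in> measurable ?P borel" by measurable
  have "measure (iso_gauss \<sigma>) {e::'a. e \<bullet> w \<le> t} = measure ?P (?T -` {e. e \<bullet> w \<le> t} \<inter> space ?P)"
    using sig by (simp add: iso_gauss_prod measure_distr[OF Tm Sm])
  also have "?T -` {e. e \<bullet> w \<le> t} \<inter> space ?P = Y -` {..t/\<sigma>} \<inter> space ?P"
    using sig by (auto simp: Tw field_simps)
  also have "measure ?P (Y -` {..t/\<sigma>} \<inter> space ?P) = measure (distr ?P lborel Y) {..t/\<sigma>}"
    by (rule measure_distr[symmetric, OF Ym]) simp
  also have "\<dots> = Phi (t/\<sigma>)" by (simp add: dY Phi_def)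
  finally show ?thesis .
qed



lemma np_core:
  fixes M :: "'a measure" and a b fa fb :: "'a \<Rightarrow> real" and l :: real
  assumes i0: "integrable M fa" and i1: "integrable M fb"
    and am[measurable]: "a \<in> borel_measurable M" and bm[measurable]: "b \<in> borel_measurable M"
    and ab: "\<And>x. \<bar>a x\<bar> \<le> 1" "\<And>x. \<bar>b x\<bar> \<le> 1"
    and pw: "\<And>x. 0 \<le> (a x - b x) * (fb x - l * fa x)"
    and l: "0 \<le> l"
    and c0: "(\<integral>x. fa x * b x \<partial>M) \<le> (\<integral>x. fa x * a x \<partial>M)"
  shows "(\<integral>x. fb x * b x \<partial>M) \<le> (\<integral>x. fb x * a x \<partial>M)"
proof -
  have fam[measurable]: "fa \<in> borel_measurable M" and fbm[measurable]: "fb \<in> borel_measurable M"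
    using i0 i1 by auto
  have int: "integrable M (\<lambda>x. f x * g x)" if "integrable M f" "g \<in> borel_measurable M"
      "\<And>x. \<bar>g x\<bar> \<le> 1" for f g :: "'a \<Rightarrow> real"
  proof (rule Bochner_Integration.integrable_bound[OF that(1)])
    show "(\<lambda>x. f x * g x) \<in> borel_measurable M" using that by measurable
    show "AE x in M. norm (f x * g x) \<le> norm (f x)"
      using that(3) by (auto simp: abs_mult intro!: mult_left_le)
  qed
  note I = int[OF i0 am ab(1)] int[OF i0 bm ab(2)] int[OF i1 am ab(1)] int[OF i1 bm ab(2)]
  have eq: "(\<lambda>x. (a x - b x) * (fb x - l * fa x)) =
      (\<lambda>x. (fb x * a x - fb x * b x) - l * (fa x * a x - fa x * b x))"
    by (auto simp: algebra_simps)
  have "0 \<le> (\<integral>x. (a x - b x) * (fb x - l * fa x) \<partial>M)"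
    by (rule integral_nonneg_AE) (simp add: pw)
  also have "\<dots> = ((\<integral>x. fb x * a x \<partial>M) - (\<integral>x. fb x * b x \<partial>M)) -
       l * ((\<integral>x. fa x * a x \<partial>M) - (\<integral>x. fa x * b x \<partial>M))"
    unfolding eq using I by (simp add: integral_diff)
  finally have "0 \<le> ((\<integral>x. fb x * a x \<partial>M) - (\<integral>x. fb x * b x \<partial>M)) -
       l * ((\<integral>x. fa x * a x \<partial>M) - (\<integral>x. fa x * b x \<partial>M))" .
  moreover have "0 \<le> l * ((\<integral>x. fa x * a x \<partial>M) - (\<integral>x. fa x * b x \<partial>M))"
    using l c0 by simp
  ultimately show ?thesis by linarith
qed

lemma prob_iso_gauss: assumes "\<sigma> > 0" shows "prob_space (iso_gauss \<sigma> :: 'a::euclidean_space measure)"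
proof -
  have ps: "prob_space (N1 \<sigma>)" using assms by (rule prob_space_normal_density)
  interpret prob_space "\<Pi>\<^sub>M b\<in>(Basis::'a set). N1 \<sigma>" by (rule prob_space_PiM) (rule ps)
  show ?thesis using assms by (simp add: iso_gauss_prod prob_space_distr)
qed

lemma phi0_nonneg: "0 \<le> phi0 \<sigma> z" by (simp add: phi0_def)

lemma phi0_pos: "\<sigma> \<noteq> 0 \<Longrightarrow> 0 < phi0 \<sigma> z" by (simp add: phi0_def)

lemma phi0_meas[measurable]: "phi0 \<sigma> \<in> borel_measurable borel"
  unfolding phi0_def[abs_def] by measurable

lemma int_N:
  fixes h :: "'a::euclidean_space \<Rightarrow> real"
  assumes [measurable]: "h \<in> borel_measurable borel"
  shows "integral\<^sup>L (iso_gauss \<sigma>) h = (\<integral>z. phi0 \<sigma> z * h z \<partial>lborel)"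
  unfolding iso_gauss_phi0 by (subst integral_density) (auto simp: phi0_nonneg)

lemma int_N_shift:
  fixes h :: "'a::euclidean_space \<Rightarrow> real"
  assumes [measurable]: "h \<in> borel_measurable borel"
  shows "(\<integral>e. h (\<delta> + e) \<partial>iso_gauss \<sigma>) = (\<integral>z. phi0 \<sigma> (z - \<delta>) * h z \<partial>lborel)"
proof -
  have "(\<integral>e. h (\<delta> + e) \<partial>iso_gauss \<sigma>) = (\<integral>e. phi0 \<sigma> e * h (\<delta> + e) \<partial>lborel)"
    by (rule int_N) measurable
  also have "\<dots> = (\<integral>z. phi0 \<sigma> (z - \<delta>) * h z \<partial>distr lborel borel ((+) \<delta>))"
    by (subst integral_distr) auto
  also have "\<dots> = (\<integral>z. phi0 \<sigma> (z - \<delta>) * h z \<partial>lborel)" by (simp add: lborel_distr_plus)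
  finally show ?thesis .
qed

lemma phi0_integrable: assumes "\<sigma> > 0"
  shows "integrable lborel (phi0 \<sigma> :: 'a::euclidean_space \<Rightarrow> real)"
proof -
  interpret prob_space "iso_gauss \<sigma> :: 'a measure" using assms by (rule prob_iso_gauss)
  have "integrable (iso_gauss \<sigma> :: 'a measure) (\<lambda>_. 1::real)" by simp
  then show ?thesis unfolding iso_gauss_phi0
    by (subst (asm) integrable_density) (auto simp: phi0_nonneg)
qed

lemma phi0_shift_integrable: assumes "\<sigma> > 0"
  shows "integrable lborel (\<lambda>z. phi0 \<sigma> (z - \<delta>) :: real)"
proof -
  have "integrable (distr lborel borel ((+) \<delta>)) (\<lambda>z. phi0 \<sigma> (z - \<delta>) :: real)"
    by (subst integrable_distr_eq) (auto simp: phi0_integrable[OF assms])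
  then show ?thesis by (simp add: lborel_distr_plus)
qed

lemma phi0_shift:
  fixes z \<delta> :: "'a::euclidean_space"
  shows "phi0 \<sigma> (z - \<delta>) = phi0 \<sigma> z * exp ((2 * (z \<bullet> \<delta>) - (norm \<delta>)\<^sup>2) / (2 * \<sigma>\<^sup>2))"
proof -
  have n: "(norm (z - \<delta>))\<^sup>2 = (norm z)\<^sup>2 - 2 * (z \<bullet> \<delta>) + (norm \<delta>)\<^sup>2"
    by (simp add: power2_norm_eq_inner inner_diff inner_commute)
  have eq: "- (norm (z - \<delta>))\<^sup>2 / (2 * \<sigma>\<^sup>2) = - (norm z)\<^sup>2 / (2 * \<sigma>\<^sup>2) + (2 * (z \<bullet> \<delta>) - (norm \<delta>)\<^sup>2) / (2 * \<sigma>\<^sup>2)"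
  proof -
    have "- (norm (z - \<delta>))\<^sup>2 = - (norm z)\<^sup>2 + (2 * (z \<bullet> \<delta>) - (norm \<delta>)\<^sup>2)" using n by simp
    then show ?thesis by (simp only: add_divide_distrib)
  qed
  show ?thesis unfolding phi0_def eq exp_add by (simp only: mult.assoc)
qed



lemma Phi_e_ereal[simp]: "Phi_e (ereal y) = Phi y" by (simp add: Phi_e_def)

lemma space_iso_gauss[simp]: "space (iso_gauss \<sigma>) = UNIV"
  by (simp add: iso_gauss_def)

lemma null_shift:
  fixes g :: "'a::euclidean_space \<Rightarrow> real"
  assumes sig: "\<sigma> > 0" and gm[measurable]: "g \<in> borel_measurable borel"
    and g0: "\<And>z. 0 \<le> g z" and g1: "\<And>z. g z \<le> 1" and int0: "integral\<^sup>L (iso_gauss \<sigma>) g = 0"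
  shows "(\<integral>e. g (\<delta> + e) \<partial>iso_gauss \<sigma>) = 0"
proof -
  have i: "integrable lborel (\<lambda>z. phi0 \<sigma> z * g z)"
  proof (rule Bochner_Integration.integrable_bound[OF phi0_integrable[OF sig]])
    show "(\<lambda>z. phi0 \<sigma> z * g z) \<in> borel_measurable lborel" by measurable
    show "AE x in lborel. norm (phi0 \<sigma> x * g x) \<le> norm (phi0 \<sigma> x :: real)"
      using g0 g1 by (auto simp: abs_mult phi0_nonneg intro!: mult_left_le)
  qed
  have "(\<integral>z. phi0 \<sigma> z * g z \<partial>lborel) = 0" using int0 by (simp add: int_N)
  then have ae: "AE z in lborel. phi0 \<sigma> z * g z = 0"
    using i g0 by (subst (asm) integral_nonneg_eq_0_iff_AE) (auto simp: phi0_nonneg)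
  have pz: "\<And>z. phi0 \<sigma> z \<noteq> 0" using phi0_pos[of \<sigma>] sig by (metis less_irrefl)
  have ae2: "AE z in lborel. g z = 0" using ae by eventually_elim (simp add: pz)
  have "(\<integral>z. phi0 \<sigma> (z - \<delta>) * g z \<partial>lborel) = integral\<^sup>L (lborel::'a measure) (\<lambda>_. 0)"
    by (rule integral_cong_AE) (use ae2 in \<open>auto elim!: AE_mp\<close>)
  then show ?thesis by (simp add: int_N_shift)
qed

lemma np_main_lower:
  fixes h :: "'a::euclidean_space \<Rightarrow> real" and \<delta> :: 'a
  assumes sig: "\<sigma> > 0" and dnz: "\<delta> \<noteq> 0" and hm[measurable]: "h \<in> borel_measurable borel"
    and h0: "\<And>z. 0 \<le> h z" and h1: "\<And>z. h z \<le> 1"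
    and pq: "Phi q \<le> integral\<^sup>L (iso_gauss \<sigma>) h"
  shows "Phi (q - norm \<delta> / \<sigma>) \<le> (\<integral>e. h (\<delta> + e) \<partial>iso_gauss \<sigma>)"
proof -
  define r where "r = norm \<delta>"
  have rpos: "r > 0" using dnz by (simp add: r_def)
  define u where "u = (1 / r) *\<^sub>R \<delta>"
  have nu: "norm u = 1" using rpos by (simp add: u_def r_def)
  have zd: "z \<bullet> \<delta> = r * (z \<bullet> u)" for z using rpos by (simp add: u_def)
  have du: "\<delta> \<bullet> u = r" using rpos by (simp add: u_def r_def power2_norm_eq_inner[symmetric] power2_eq_square)
  define H where "H = {z::'a. z \<bullet> u \<le> \<sigma> * q}"
  have Hm[measurable]: "H \<in> sets borel" unfolding H_def by measurable
  define l where "l = exp ((2 * r * (\<sigma> * q) - r\<^sup>2) / (2 * \<sigma>\<^sup>2))"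
  have E: "phi0 \<sigma> (z - \<delta>) - l * phi0 \<sigma> z = phi0 \<sigma> z * (exp ((2 * (z \<bullet> \<delta>) - r\<^sup>2) / (2 * \<sigma>\<^sup>2)) - l)" for z
    by (simp add: phi0_shift r_def algebra_simps)
  have pw: "0 \<le> (h z - indicator H z) * (phi0 \<sigma> (z - \<delta>) - l * phi0 \<sigma> z)" for z
  proof (cases "z \<in> H")
    case True
    then have "2 * (z \<bullet> \<delta>) - r\<^sup>2 \<le> 2 * r * (\<sigma> * q) - r\<^sup>2"
      using rpos by (simp add: H_def zd mult_left_mono)
    then have "(2 * (z \<bullet> \<delta>) - r\<^sup>2) / (2 * \<sigma>\<^sup>2) \<le> (2 * r * (\<sigma> * q) - r\<^sup>2) / (2 * \<sigma>\<^sup>2)"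
      by (intro divide_right_mono) auto
    then have "exp ((2 * (z \<bullet> \<delta>) - r\<^sup>2) / (2 * \<sigma>\<^sup>2)) - l \<le> 0" by (simp add: l_def)
    then have "phi0 \<sigma> z * (exp ((2 * (z \<bullet> \<delta>) - r\<^sup>2) / (2 * \<sigma>\<^sup>2)) - l) \<le> 0"
      by (intro mult_nonneg_nonpos phi0_nonneg)
    moreover have "h z - indicator H z \<le> 0" using True h1[of z] by simp
    ultimately show ?thesis unfolding E by (metis mult_nonpos_nonpos)
  next
    case False
    then have "2 * r * (\<sigma> * q) - r\<^sup>2 \<le> 2 * (z \<bullet> \<delta>) - r\<^sup>2"
      using rpos by (simp add: H_def zd mult_left_mono)
    then have "(2 * r * (\<sigma> * q) - r\<^sup>2) / (2 * \<sigma>\<^sup>2) \<le> (2 * (z \<bullet> \<delta>) - r\<^sup>2) / (2 * \<sigma>\<^sup>2)"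
      by (intro divide_right_mono) auto
    then have "0 \<le> exp ((2 * (z \<bullet> \<delta>) - r\<^sup>2) / (2 * \<sigma>\<^sup>2)) - l" by (simp add: l_def)
    then have "0 \<le> phi0 \<sigma> z * (exp ((2 * (z \<bullet> \<delta>) - r\<^sup>2) / (2 * \<sigma>\<^sup>2)) - l)"
      by (intro mult_nonneg_nonneg phi0_nonneg)
    moreover have "0 \<le> h z - indicator H z" using False h0[of z] by simp
    ultimately show ?thesis unfolding E by (metis mult_nonneg_nonneg)
  qed
  have pH: "integral\<^sup>L (iso_gauss \<sigma>) (indicator H) = Phi q"
    using marginal[OF sig nu, of "\<sigma> * q"] sig by (simp add: H_def)
  have "(\<integral>z. phi0 \<sigma> (z - \<delta>) * indicator H z \<partial>lborel) \<le> (\<integral>z. phi0 \<sigma> (z - \<delta>) * h z \<partial>lborel)"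
  proof (rule np_core[where fa="phi0 \<sigma>" and l=l])
    show "integrable lborel (phi0 \<sigma> :: 'a \<Rightarrow> real)" by (rule phi0_integrable[OF sig])
    show "integrable lborel (\<lambda>z. phi0 \<sigma> (z - \<delta>))" by (rule phi0_shift_integrable[OF sig])
    show "h \<in> borel_measurable lborel" by simp
    show "indicator H \<in> borel_measurable lborel" by simp
    show "\<bar>h x\<bar> \<le> 1" for x using h0[of x] h1[of x] by simp
    show "\<bar>indicator H x :: real\<bar> \<le> 1" for x by (simp split: split_indicator)
    show "0 \<le> (h x - indicator H x) * (phi0 \<sigma> (x - \<delta>) - l * phi0 \<sigma> x)" for x by (rule pw)
    show "0 \<le> l" by (simp add: l_def)
    show "(\<integral>x. phi0 \<sigma> x * indicator H x \<partial>lborel) \<le> (\<integral>x. phi0 \<sigma> x * h x \<partial>lborel)"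
      using pq pH by (simp add: int_N[symmetric])
  qed
  then have "(\<integral>e. indicator H (\<delta> + e) \<partial>iso_gauss \<sigma>) \<le> (\<integral>e. h (\<delta> + e) \<partial>iso_gauss \<sigma>)"
    by (simp add: int_N_shift)
  moreover have "(\<lambda>e. indicator H (\<delta> + e) :: real) = indicator {e. e \<bullet> u \<le> \<sigma> * q - r}"
    by (auto simp: H_def inner_add_left du split: split_indicator)
  moreover have "measure (iso_gauss \<sigma>) {e::'a. e \<bullet> u \<le> \<sigma> * q - r} = Phi (q - norm \<delta> / \<sigma>)"
    using marginal[OF sig nu, of "\<sigma> * q - r"] sig by (simp add: r_def diff_divide_distrib)
  ultimately show ?thesis by simp
qed



lemma np_main_upper:
  fixes h :: "'a::euclidean_space \<Rightarrow> real" and \<delta> :: 'a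
  assumes sig: "\<sigma> > 0" and dnz: "\<delta> \<noteq> 0" and hm[measurable]: "h \<in> borel_measurable borel"
    and h0: "\<And>z. 0 \<le> h z" and h1: "\<And>z. h z \<le> 1"
    and pq: "integral\<^sup>L (iso_gauss \<sigma>) h \<le> Phi q"
  shows "(\<integral>e. h (\<delta> + e) \<partial>iso_gauss \<sigma>) \<le> Phi (q + norm \<delta> / \<sigma>)"
proof -
  define r where "r = norm \<delta>"
  have rpos: "r > 0" using dnz by (simp add: r_def)
  define u where "u = (1 / r) *\<^sub>R \<delta>"
  have nu: "norm (- u) = 1" using rpos by (simp add: u_def r_def)
  have zd: "z \<bullet> \<delta> = r * (z \<bullet> u)" for z using rpos by (simp add: u_def)
  have du: "\<delta> \<bullet> u = r" using rpos by (simp add: u_def r_def power2_norm_eq_inner[symmetric] power2_eq_square)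
  define K where "K = {z::'a. z \<bullet> (- u) \<le> \<sigma> * q}"
  have Km[measurable]: "K \<in> sets borel" unfolding K_def by measurable
  define l where "l = exp ((- 2 * r * (\<sigma> * q) - r\<^sup>2) / (2 * \<sigma>\<^sup>2))"
  have E: "phi0 \<sigma> (z - \<delta>) - l * phi0 \<sigma> z = phi0 \<sigma> z * (exp ((2 * (z \<bullet> \<delta>) - r\<^sup>2) / (2 * \<sigma>\<^sup>2)) - l)" for z
    by (simp add: phi0_shift r_def algebra_simps)
  have pw: "0 \<le> (indicator K z - h z) * (phi0 \<sigma> (z - \<delta>) - l * phi0 \<sigma> z)" for z
  proof (cases "z \<in> K")
    case True
    then have "- \<sigma> * q \<le> z \<bullet> u" by (simp add: K_def)
    then have "r * (- \<sigma> * q) \<le> r * (z \<bullet> u)" using rpos by (intro mult_left_mono) auto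
    then have "- 2 * r * (\<sigma> * q) - r\<^sup>2 \<le> 2 * (z \<bullet> \<delta>) - r\<^sup>2"
      by (simp add: zd mult_ac)
    then have "(- 2 * r * (\<sigma> * q) - r\<^sup>2) / (2 * \<sigma>\<^sup>2) \<le> (2 * (z \<bullet> \<delta>) - r\<^sup>2) / (2 * \<sigma>\<^sup>2)"
      by (intro divide_right_mono) auto
    then have "0 \<le> exp ((2 * (z \<bullet> \<delta>) - r\<^sup>2) / (2 * \<sigma>\<^sup>2)) - l" by (simp add: l_def)
    then have "0 \<le> phi0 \<sigma> z * (exp ((2 * (z \<bullet> \<delta>) - r\<^sup>2) / (2 * \<sigma>\<^sup>2)) - l)"
      by (intro mult_nonneg_nonneg phi0_nonneg)
    moreover have "0 \<le> indicator K z - h z" using True h1[of z] by simp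
    ultimately show ?thesis unfolding E by (metis mult_nonneg_nonneg)
  next
    case False
    then have "z \<bullet> u \<le> - \<sigma> * q" by (simp add: K_def)
    then have "r * (z \<bullet> u) \<le> r * (- \<sigma> * q)" using rpos by (intro mult_left_mono) auto
    then have "2 * (z \<bullet> \<delta>) - r\<^sup>2 \<le> - 2 * r * (\<sigma> * q) - r\<^sup>2"
      by (simp add: zd mult_ac)
    then have "(2 * (z \<bullet> \<delta>) - r\<^sup>2) / (2 * \<sigma>\<^sup>2) \<le> (- 2 * r * (\<sigma> * q) - r\<^sup>2) / (2 * \<sigma>\<^sup>2)"
      by (intro divide_right_mono) auto
    then have "exp ((2 * (z \<bullet> \<delta>) - r\<^sup>2) / (2 * \<sigma>\<^sup>2)) - l \<le> 0" by (simp add: l_def)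
    then have "phi0 \<sigma> z * (exp ((2 * (z \<bullet> \<delta>) - r\<^sup>2) / (2 * \<sigma>\<^sup>2)) - l) \<le> 0"
      by (intro mult_nonneg_nonpos phi0_nonneg)
    moreover have "indicator K z - h z \<le> 0" using False h0[of z] by simp
    ultimately show ?thesis unfolding E by (metis mult_nonpos_nonpos)
  qed
  have pK: "integral\<^sup>L (iso_gauss \<sigma>) (indicator K) = Phi q"
    using marginal[OF sig nu, of "\<sigma> * q"] sig by (simp add: K_def)
  have "(\<integral>z. phi0 \<sigma> (z - \<delta>) * h z \<partial>lborel) \<le> (\<integral>z. phi0 \<sigma> (z - \<delta>) * indicator K z \<partial>lborel)"
  proof (rule np_core[where fa="phi0 \<sigma>" and l=l])
    show "integrable lborel (phi0 \<sigma> :: 'a \<Rightarrow> real)" by (rule phi0_integrable[OF sig])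
    show "integrable lborel (\<lambda>z. phi0 \<sigma> (z - \<delta>))" by (rule phi0_shift_integrable[OF sig])
    show "h \<in> borel_measurable lborel" by simp
    show "indicator K \<in> borel_measurable lborel" by simp
    show "\<bar>h x\<bar> \<le> 1" for x using h0[of x] h1[of x] by simp
    show "\<bar>indicator K x :: real\<bar> \<le> 1" for x by (simp split: split_indicator)
    show "0 \<le> (indicator K x - h x) * (phi0 \<sigma> (x - \<delta>) - l * phi0 \<sigma> x)" for x by (rule pw)
    show "0 \<le> l" by (simp add: l_def)
    show "(\<integral>x. phi0 \<sigma> x * h x \<partial>lborel) \<le> (\<integral>x. phi0 \<sigma> x * indicator K x \<partial>lborel)"
      using pq pK by (simp add: int_N[symmetric])
  qed
  then have "(\<integral>e. h (\<delta> + e) \<partial>iso_gauss \<sigma>) \<le> (\<integral>e. indicator K (\<delta> + e) \<partial>iso_gauss \<sigma>)"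
    by (simp add: int_N_shift)
  moreover have "(\<lambda>e. indicator K (\<delta> + e) :: real) = indicator {e. e \<bullet> (- u) \<le> \<sigma> * q + r}"
    by (auto simp: K_def inner_add_left du split: split_indicator)
  moreover have "measure (iso_gauss \<sigma>) {e::'a. e \<bullet> (- u) \<le> \<sigma> * q + r} = Phi (q + norm \<delta> / \<sigma>)"
    using marginal[OF sig nu, of "\<sigma> * q + r"] sig by (simp add: r_def add_divide_distrib)
  ultimately show ?thesis by simp
qed

lemma int_iso_bounded:
  fixes h :: "'a::euclidean_space \<Rightarrow> real"
  assumes sig: "\<sigma> > 0" and [measurable]: "h \<in> borel_measurable borel" and "\<And>z. \<bar>h z\<bar> \<le> 1"
  shows "integrable (iso_gauss \<sigma>) h"
proof -
  interpret prob_space "iso_gauss \<sigma> :: 'a measure" using sig by (rule prob_iso_gauss)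
  show ?thesis by (rule integrable_const_bound[where B=1]) (auto simp: assms iso_gauss_def)
qed

lemma np_lower:
  fixes h :: "'a::euclidean_space \<Rightarrow> real" and \<delta> :: 'a
  assumes sig: "\<sigma> > 0" and dnz: "\<delta> \<noteq> 0" and hm[measurable]: "h \<in> borel_measurable borel"
    and h0: "\<And>z. 0 \<le> h z" and h1: "\<And>z. h z \<le> 1"
    and p: "0 \<le> p" "p \<le> 1" and ph: "p \<le> integral\<^sup>L (iso_gauss \<sigma>) h"
  shows "Phi_e (Phi_inv p - ereal (norm \<delta> / \<sigma>)) \<le> (\<integral>e. h (\<delta> + e) \<partial>iso_gauss \<sigma>)"
proof -
  interpret prob_space "iso_gauss \<sigma> :: 'a measure" using sig by (rule prob_iso_gauss)
  have pU: "prob UNIV = 1" using prob_space by simp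
  have hi: "integrable (iso_gauss \<sigma>) h" using h0 h1 by (intro int_iso_bounded[OF sig]) (auto simp: abs_le_iff intro: order_trans[OF _ h0])
  consider "p = 0" | "p = 1" | "0 < p \<and> p < 1" using p by linarith
  then show ?thesis
  proof cases
    case 1
    then have "Phi_e (Phi_inv p - ereal (norm \<delta> / \<sigma>)) = 0" by (simp add: Phi_inv_def Phi_e_def)
    then show ?thesis using h0 by (simp add: integral_nonneg_AE)
  next
    case 2
    then have L: "Phi_e (Phi_inv p - ereal (norm \<delta> / \<sigma>)) = 1" by (simp add: Phi_inv_def Phi_e_def)
    have "integral\<^sup>L (iso_gauss \<sigma>) (\<lambda>z. 1 - h z) = 1 - integral\<^sup>L (iso_gauss \<sigma>) h"
      using hi by (simp add: pU)
    moreover have "0 \<le> integral\<^sup>L (iso_gauss \<sigma>) (\<lambda>z. 1 - h z)" using h1 by (simp add: integral_nonneg_AE)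
    ultimately have "integral\<^sup>L (iso_gauss \<sigma>) (\<lambda>z. 1 - h z) = 0" using ph 2 by linarith
    then have "(\<integral>e. 1 - h (\<delta> + e) \<partial>iso_gauss \<sigma>) = 0"
      using null_shift[OF sig, of "\<lambda>z. 1 - h z"] h0 h1 by auto
    moreover have "integrable (iso_gauss \<sigma>) (\<lambda>e. h (\<delta> + e))"
      using h0 h1 by (intro int_iso_bounded[OF sig]) (auto simp: abs_le_iff intro: order_trans[OF _ h0])
    ultimately have "(\<integral>e. h (\<delta> + e) \<partial>iso_gauss \<sigma>) = 1" by (simp add: pU)
    then show ?thesis using L by simp
  next
    case 3
    then have e: "Phi_inv p = ereal (THE x. Phi x = p)" "Phi (THE x. Phi x = p) = p"
      using Phi_inv_real by auto
    have "Phi ((THE x. Phi x = p) - norm \<delta> / \<sigma>) \<le> (\<integral>e. h (\<delta> + e) \<partial>iso_gauss \<sigma>)"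
      by (rule np_main_lower[OF sig dnz hm h0 h1]) (use e ph in simp)
    then show ?thesis using e by simp
  qed
qed

lemma np_upper:
  fixes h :: "'a::euclidean_space \<Rightarrow> real" and \<delta> :: 'a
  assumes sig: "\<sigma> > 0" and dnz: "\<delta> \<noteq> 0" and hm[measurable]: "h \<in> borel_measurable borel"
    and h0: "\<And>z. 0 \<le> h z" and h1: "\<And>z. h z \<le> 1"
    and p: "0 \<le> p" "p \<le> 1" and ph: "integral\<^sup>L (iso_gauss \<sigma>) h \<le> p"
  shows "(\<integral>e. h (\<delta> + e) \<partial>iso_gauss \<sigma>) \<le> Phi_e (Phi_inv p + ereal (norm \<delta> / \<sigma>))"
proof -
  interpret prob_space "iso_gauss \<sigma> :: 'a measure" using sig by (rule prob_iso_gauss)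
  have pU: "prob UNIV = 1" using prob_space by simp
  have hi2: "integrable (iso_gauss \<sigma>) (\<lambda>e. h (\<delta> + e))"
    using h0 h1 by (intro int_iso_bounded[OF sig]) (auto simp: abs_le_iff intro: order_trans[OF _ h0])
  consider "p = 0" | "p = 1" | "0 < p \<and> p < 1" using p by linarith
  then show ?thesis
  proof cases
    case 1
    then have L: "Phi_e (Phi_inv p + ereal (norm \<delta> / \<sigma>)) = 0" by (simp add: Phi_inv_def Phi_e_def)
    have "0 \<le> integral\<^sup>L (iso_gauss \<sigma>) h" using h0 by (simp add: integral_nonneg_AE)
    then have "integral\<^sup>L (iso_gauss \<sigma>) h = 0" using ph 1 by linarith
    then have "(\<integral>e. h (\<delta> + e) \<partial>iso_gauss \<sigma>) = 0"
      using null_shift[OF sig hm h0 h1] by auto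
    then show ?thesis using L by simp
  next
    case 2
    then have L: "Phi_e (Phi_inv p + ereal (norm \<delta> / \<sigma>)) = 1" by (simp add: Phi_inv_def Phi_e_def)
    have "(\<integral>e. h (\<delta> + e) \<partial>iso_gauss \<sigma>) \<le> integral\<^sup>L (iso_gauss \<sigma> :: 'a measure) (\<lambda>_. 1)"
      by (rule integral_mono) (use hi2 h1 in auto)
    then show ?thesis using L by (simp add: pU)
  next
    case 3
    then have e: "Phi_inv p = ereal (THE x. Phi x = p)" "Phi (THE x. Phi x = p) = p"
      using Phi_inv_real by auto
    have "(\<integral>e. h (\<delta> + e) \<partial>iso_gauss \<sigma>) \<le> Phi ((THE x. Phi x = p) + norm \<delta> / \<sigma>)"
      by (rule np_main_upper[OF sig dnz hm h0 h1]) (use e ph in simp)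
    then show ?thesis using e by simp
  qed
qed



lemma ml_meas:
  assumes f: "multilabel_classifier c k' f"
  shows "{w. i \<in> f w} \<in> sets borel"
  using f by (simp add: multilabel_classifier_def)

lemma ml_ind_meas[measurable]:
  fixes f :: "'a::euclidean_space \<Rightarrow> nat set"
  assumes f: "multilabel_classifier c k' f"
  shows "(\<lambda>e. indicator {w. i \<in> f w} (y + e) :: real) \<in> borel_measurable borel"
proof -
  have [measurable]: "{w. i \<in> f w} \<in> sets borel" by (rule ml_meas[OF f])
  show ?thesis by measurable
qed

lemma ml_int_ind:
  fixes f :: "'a::euclidean_space \<Rightarrow> nat set"
  shows "(\<integral>e. indicator {w. i \<in> f w} (y + e) \<partial>iso_gauss \<sigma>) = measure (iso_gauss \<sigma>) {e. i \<in> f (y + e)}"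
proof -
  have "(\<lambda>e. indicator {w. i \<in> f w} (y + e) :: real) = indicator {e. i \<in> f (y + e)}"
    by (auto split: split_indicator)
  then show ?thesis by simp
qed

lemma ml_sum_card:
  fixes f :: "'a::euclidean_space \<Rightarrow> nat set"
  assumes f: "multilabel_classifier c k' f" and G: "\<Gamma> \<subseteq> {1..c}"
  shows "(\<Sum>i\<in>\<Gamma>. indicator {w. i \<in> f w} z :: real) \<le> real k'"
proof -
  have fin: "finite \<Gamma>" using G finite_subset by blast
  have "(\<Sum>i\<in>\<Gamma>. indicator {w. i \<in> f w} z :: real) = (\<Sum>i\<in>\<Gamma>. indicator (f z) i)"
    by (intro sum.cong) (auto split: split_indicator)
  also have "\<dots> = real (card (\<Gamma> \<inter> f z))" using fin by (simp add: indicator_def sum.If_cases Int_def)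
  also have "card (\<Gamma> \<inter> f z) \<le> card (f z)"
    using f by (intro card_mono) (auto simp: multilabel_classifier_def intro: finite_subset)
  also have "card (f z) = k'" using f by (simp add: multilabel_classifier_def)
  finally show ?thesis by simp
qed

lemma ml_int_sum:
  fixes f :: "'a::euclidean_space \<Rightarrow> nat set"
  assumes sig: "\<sigma> > 0" and f: "multilabel_classifier c k' f" and G: "\<Gamma> \<subseteq> {1..c}"
  shows "(\<integral>e. (\<Sum>i\<in>\<Gamma>. indicator {w. i \<in> f w} (y + e)) / real k' \<partial>iso_gauss \<sigma>)
     = (\<Sum>i\<in>\<Gamma>. measure (iso_gauss \<sigma>) {e. i \<in> f (y + e)}) / real k'"
proof -
  have "(\<integral>e. (\<Sum>i\<in>\<Gamma>. indicator {w. i \<in> f w} (y + e) :: real) \<partial>iso_gauss \<sigma>)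
      = (\<Sum>i\<in>\<Gamma>. (\<integral>e. (indicator {w. i \<in> f w} (y + e) :: real) \<partial>iso_gauss \<sigma>))"
    by (rule Bochner_Integration.integral_sum) (intro int_iso_bounded[OF sig] ml_ind_meas[OF f]; simp split: split_indicator)
  then show ?thesis by (simp add: ml_int_ind)
qed



theorem mainTheorem5:
  fixes f :: "'a::euclidean_space \<Rightarrow> nat set"
    and c k' :: nat and x \<delta> :: 'a and \<sigma> :: real
    and \<Gamma> \<Lambda> :: "nat set" and pl pu :: "nat \<Rightarrow> real"
  assumes f: "multilabel_classifier c k' f"
    and \<sigma>: "\<sigma> > 0"
    and \<delta>: "\<delta> \<noteq> 0"
    and \<Gamma>: "\<Gamma> \<subseteq> {1..c}" "\<Gamma> \<noteq> {}"
    and pl: "\<And>i. i \<in> \<Gamma> \<Longrightarrow> 0 \<le> pl i \<and> pl i \<le> 1"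
    and pl_le: "\<And>i. i \<in> \<Gamma> \<Longrightarrow> pl i \<le> measure (iso_gauss \<sigma>) {e. i \<in> f (x + e)}"
    and pl_sum: "(\<Sum>i\<in>\<Gamma>. pl i) \<le> real k'"
    and \<Lambda>: "\<Lambda> \<subseteq> {1..c}" "\<Lambda> \<noteq> {}"
    and pu: "\<And>j. j \<in> \<Lambda> \<Longrightarrow> 0 \<le> pu j \<and> pu j \<le> 1"
    and pu_ge: "\<And>j. j \<in> \<Lambda> \<Longrightarrow> measure (iso_gauss \<sigma>) {e. j \<in> f (x + e)} \<le> pu j"
    and pu_sum: "(\<Sum>j\<in>\<Lambda>. pu j) \<le> real k'"
  shows "Max ((\<lambda>i. measure (iso_gauss \<sigma>) {e. i \<in> f (x + \<delta> + e)}) ` \<Gamma>)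
           \<ge> max (Max ((\<lambda>i. Phi_e (Phi_inv (pl i) - ereal (norm \<delta> / \<sigma>))) ` \<Gamma>))
                  (real k' / real (card \<Gamma>) *
                     Phi_e (Phi_inv ((\<Sum>i\<in>\<Gamma>. pl i) / real k') - ereal (norm \<delta> / \<sigma>)))
       \<and> Min ((\<lambda>j. measure (iso_gauss \<sigma>) {e. j \<in> f (x + \<delta> + e)}) ` \<Lambda>)
           \<le> min (Min ((\<lambda>j. Phi_e (Phi_inv (pu j) + ereal (norm \<delta> / \<sigma>))) ` \<Lambda>))
                  (real k' / real (card \<Lambda>) *
                     Phi_e (Phi_inv ((\<Sum>j\<in>\<Lambda>. pu j) / real k') + ereal (norm \<delta> / \<sigma>)))"
proof -
  define N where "N = (iso_gauss \<sigma> :: 'a measure)"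
  interpret prob_space N unfolding N_def using \<sigma> by (rule prob_iso_gauss)
  define ps where "ps i = measure N {e. i \<in> f (x + e)}" for i
  define qs where "qs i = measure N {e. i \<in> f (x + \<delta> + e)}" for i
  have finG: "finite \<Gamma>" using \<Gamma>(1) finite_subset by blast
  have finL: "finite \<Lambda>" using \<Lambda>(1) finite_subset by blast
  have shift: "(\<lambda>e. h (x + (\<delta> + e))) = (\<lambda>e. h ((x + \<delta>) + e))" for h :: "'a \<Rightarrow> real"
    by (simp add: add.assoc)
  have low1: "Phi_e (Phi_inv (pl i) - ereal (norm \<delta> / \<sigma>)) \<le> qs i" if i: "i \<in> \<Gamma>" for i
  proof -
    have "Phi_e (Phi_inv (pl i) - ereal (norm \<delta> / \<sigma>))
        \<le> (\<integral>e. (\<lambda>e. indicator {w. i \<in> f w} (x + e) :: real) (\<delta> + e) \<partial>iso_gauss \<sigma>)"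
    proof (rule np_lower[OF \<sigma> \<delta>])
      show "(\<lambda>e. indicator {w. i \<in> f w} (x + e) :: real) \<in> borel_measurable borel"
        by (rule ml_ind_meas[OF f])
      show "0 \<le> pl i" "pl i \<le> 1" using pl[OF i] by auto
      show "pl i \<le> (\<integral>e. (indicator {w. i \<in> f w} (x + e) :: real) \<partial>iso_gauss \<sigma>)"
        using pl_le[OF i] by (simp add: ml_int_ind)
    qed (auto split: split_indicator)
    also have "\<dots> = qs i" unfolding qs_def N_def by (simp add: shift ml_int_ind)
    finally show ?thesis .
  qed
  have up1: "qs j \<le> Phi_e (Phi_inv (pu j) + ereal (norm \<delta> / \<sigma>))" if j: "j \<in> \<Lambda>" for j
  proof -
    have "qs j = (\<integral>e. (\<lambda>e. indicator {w. j \<in> f w} (x + e) :: real) (\<delta> + e) \<partial>iso_gauss \<sigma>)"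
      unfolding qs_def N_def by (simp add: shift ml_int_ind)
    also have "\<dots> \<le> Phi_e (Phi_inv (pu j) + ereal (norm \<delta> / \<sigma>))"
    proof (rule np_upper[OF \<sigma> \<delta>])
      show "(\<lambda>e. indicator {w. j \<in> f w} (x + e) :: real) \<in> borel_measurable borel"
        by (rule ml_ind_meas[OF f])
      show "0 \<le> pu j" "pu j \<le> 1" using pu[OF j] by auto
      show "(\<integral>e. (indicator {w. j \<in> f w} (x + e) :: real) \<partial>iso_gauss \<sigma>) \<le> pu j"
        using pu_ge[OF j] by (simp add: ml_int_ind)
    qed (auto split: split_indicator)
    finally show ?thesis .
  qed
  have qs0: "0 \<le> qs i" for i unfolding qs_def by simp
  have agg_low: "real k' / real (card \<Gamma>) *
       Phi_e (Phi_inv ((\<Sum>i\<in>\<Gamma>. pl i) / real k') - ereal (norm \<delta> / \<sigma>)) \<le> Max (qs ` \<Gamma>)"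
  proof (cases "k' = 0")
    case True
    obtain i0 where "i0 \<in> \<Gamma>" using \<Gamma>(2) by blast
    then show ?thesis using finG \<Gamma>(2) qs0 True by (auto simp: Max_ge_iff)
  next
    case False
    then have kpos: "real k' > 0" by simp
    define G where "G e = (\<Sum>i\<in>\<Gamma>. indicator {w. i \<in> f w} (x + e)) / real k'" for e
    have Gm: "G \<in> borel_measurable borel" unfolding G_def[abs_def]
      using ml_ind_meas[OF f] by measurable
    have G0: "0 \<le> G e" for e unfolding G_def by (simp add: sum_nonneg)
    have G1: "G e \<le> 1" for e unfolding G_def using ml_sum_card[OF f \<Gamma>(1)] kpos by simp
    have "Phi_e (Phi_inv ((\<Sum>i\<in>\<Gamma>. pl i) / real k') - ereal (norm \<delta> / \<sigma>))
        \<le> (\<integral>e. G (\<delta> + e) \<partial>iso_gauss \<sigma>)"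
    proof (rule np_lower[OF \<sigma> \<delta> Gm G0 G1])
      show "0 \<le> (\<Sum>i\<in>\<Gamma>. pl i) / real k'" using pl by (simp add: sum_nonneg)
      show "(\<Sum>i\<in>\<Gamma>. pl i) / real k' \<le> 1" using pl_sum kpos by simp
      have "(\<Sum>i\<in>\<Gamma>. pl i) \<le> (\<Sum>i\<in>\<Gamma>. measure (iso_gauss \<sigma>) {e. i \<in> f (x + e)})"
        using pl_le by (rule sum_mono)
      then show "(\<Sum>i\<in>\<Gamma>. pl i) / real k' \<le> integral\<^sup>L (iso_gauss \<sigma>) G"
        unfolding G_def using ml_int_sum[OF \<sigma> f \<Gamma>(1)] kpos by (simp add: divide_right_mono)
    qed
    also have "(\<integral>e. G (\<delta> + e) \<partial>iso_gauss \<sigma>) = (\<Sum>i\<in>\<Gamma>. qs i) / real k'"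
      unfolding G_def qs_def N_def using ml_int_sum[OF \<sigma> f \<Gamma>(1), of "x + \<delta>"]
      by (simp add: add.assoc)
    also have "(\<Sum>i\<in>\<Gamma>. qs i) \<le> real (card \<Gamma>) * Max (qs ` \<Gamma>)"
      by (rule sum_bounded_above) (use finG in simp)
    finally have "Phi_e (Phi_inv ((\<Sum>i\<in>\<Gamma>. pl i) / real k') - ereal (norm \<delta> / \<sigma>))
       \<le> real (card \<Gamma>) * Max (qs ` \<Gamma>) / real k'" using kpos by (simp add: divide_right_mono)
    moreover have cG: "real (card \<Gamma>) > 0" using finG \<Gamma>(2) by (simp add: card_gt_0_iff)
    ultimately have "real k' / real (card \<Gamma>) * Phi_e (Phi_inv ((\<Sum>i\<in>\<Gamma>. pl i) / real k') - ereal (norm \<delta> / \<sigma>))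
       \<le> real k' / real (card \<Gamma>) * (real (card \<Gamma>) * Max (qs ` \<Gamma>) / real k')"
      using kpos cG by (intro mult_left_mono) auto
    also have "\<dots> = Max (qs ` \<Gamma>)" using kpos cG by (simp add: field_simps)
    finally show ?thesis .
  qed
  have agg_up: "Min (qs ` \<Lambda>) \<le> real k' / real (card \<Lambda>) *
       Phi_e (Phi_inv ((\<Sum>j\<in>\<Lambda>. pu j) / real k') + ereal (norm \<delta> / \<sigma>))"
  proof (cases "k' = 0")
    case True
    have "qs j = 0" for j
    proof -
      have "f w = {}" for w
      proof -
        have fw: "f w \<subseteq> {1..c}" "card (f w) = k'" using f by (auto simp: multilabel_classifier_def)
        have "finite (f w)" using fw(1) by (rule finite_subset) simp
        then show ?thesis using fw(2) True by simp
      qed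
      then show ?thesis unfolding qs_def by simp
    qed
    then show ?thesis using finL \<Lambda>(2) True by (simp add: Min_le_iff)
  next
    case False
    then have kpos: "real k' > 0" by simp
    define G where "G e = (\<Sum>i\<in>\<Lambda>. indicator {w. i \<in> f w} (x + e)) / real k'" for e
    have Gm: "G \<in> borel_measurable borel" unfolding G_def[abs_def]
      using ml_ind_meas[OF f] by measurable
    have G0: "0 \<le> G e" for e unfolding G_def by (simp add: sum_nonneg)
    have G1: "G e \<le> 1" for e unfolding G_def using ml_sum_card[OF f \<Lambda>(1)] kpos by simp
    have cL: "real (card \<Lambda>) > 0" using finL \<Lambda>(2) by (simp add: card_gt_0_iff)
    have "real (card \<Lambda>) * Min (qs ` \<Lambda>) \<le> (\<Sum>i\<in>\<Lambda>. qs i)"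
      by (rule sum_bounded_below) (use finL in simp)
    also have "(\<Sum>i\<in>\<Lambda>. qs i) / real k' = (\<integral>e. G (\<delta> + e) \<partial>iso_gauss \<sigma>)"
      unfolding G_def qs_def N_def using ml_int_sum[OF \<sigma> f \<Lambda>(1), of "x + \<delta>"]
      by (simp add: add.assoc) metis
    then have "(\<Sum>i\<in>\<Lambda>. qs i) = real k' * (\<integral>e. G (\<delta> + e) \<partial>iso_gauss \<sigma>)"
      using kpos by (simp add: field_simps)
    also have "(\<integral>e. G (\<delta> + e) \<partial>iso_gauss \<sigma>)
        \<le> Phi_e (Phi_inv ((\<Sum>j\<in>\<Lambda>. pu j) / real k') + ereal (norm \<delta> / \<sigma>))"
    proof (rule np_upper[OF \<sigma> \<delta> Gm G0 G1])
      show "0 \<le> (\<Sum>i\<in>\<Lambda>. pu i) / real k'" using pu by (simp add: sum_nonneg)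
      show "(\<Sum>i\<in>\<Lambda>. pu i) / real k' \<le> 1" using pu_sum kpos by simp
      have "(\<Sum>i\<in>\<Lambda>. measure (iso_gauss \<sigma>) {e. i \<in> f (x + e)}) \<le> (\<Sum>i\<in>\<Lambda>. pu i)"
        using pu_ge by (rule sum_mono)
      then show "integral\<^sup>L (iso_gauss \<sigma>) G \<le> (\<Sum>i\<in>\<Lambda>. pu i) / real k'"
        unfolding G_def using ml_int_sum[OF \<sigma> f \<Lambda>(1)] kpos by (simp add: divide_right_mono)
    qed
    finally have "real (card \<Lambda>) * Min (qs ` \<Lambda>) \<le> real k' *
        Phi_e (Phi_inv ((\<Sum>j\<in>\<Lambda>. pu j) / real k') + ereal (norm \<delta> / \<sigma>))"
      using kpos by (simp add: mult_left_mono)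
    then show ?thesis using cL by (simp add: field_simps)
  qed
  have A: "Max ((\<lambda>i. Phi_e (Phi_inv (pl i) - ereal (norm \<delta> / \<sigma>))) ` \<Gamma>) \<le> Max (qs ` \<Gamma>)"
    using finG \<Gamma>(2) by (auto simp: Max_le_iff intro!: order_trans[OF low1 Max_ge])
  have B: "Min (qs ` \<Lambda>) \<le> Min ((\<lambda>j. Phi_e (Phi_inv (pu j) + ereal (norm \<delta> / \<sigma>))) ` \<Lambda>)"
    using finL \<Lambda>(2) by (auto simp: Min_ge_iff intro!: order_trans[OF Min_le up1])
  show ?thesis using A B agg_low agg_up unfolding qs_def N_def by simp
qed


end
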